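(* Let $\mathscr{C}$ be an apex-minor-free class of graphs. There exists a constant $\nu_{\mathscr{C}}>0$ depending only on $\mathscr{C}$ such that for every $G\in\mathscr{C}$ and every nonempty $X\subseteq V(G)$, $$\left|\{N(C)\colon C\in \mathrm{cc}(G\setminus X)\}\right|\le \nu_{\mathscr{C}}\cdot |X|.$$
   Context: A class $\mathscr{C}$ is apex-minor-free if it is minor-closed and excludes some fixed apex graph (a graph that becomes planar after deleting one vertex) as a minor. $\mathrm{cc}(G\setminus X)$ denotes the set of (vertex sets of) connected components of the graph $G\setminus X$ obtained by deleting $X$, and for a vertex set $C$, $N(C)$ denotes the set of vertices outside $C$ adjacent to some vertex of $C$. *)

theory Defs
  imports "HOL-Analysis.Analysis"
begin

type_synonym graph = "nat set \<times> nat set set"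

definition verts :: "graph \<Rightarrow> nat set" where "verts G = fst G"
definition edges :: "graph \<Rightarrow> nat set set" where "edges G = snd G"

definition wf_graph :: "graph \<Rightarrow> bool" where
  "wf_graph G \<longleftrightarrow> finite (verts G) \<and>
     (\<forall>e\<in>edges G. e \<subseteq> verts G \<and> card e = 2)"

definition adj :: "graph \<Rightarrow> (nat \<times> nat) set" where
  "adj G = {(u, v). {u, v} \<in> edges G}"

definition delete_verts :: "graph \<Rightarrow> nat set \<Rightarrow> graph" where
  "delete_verts G X = (verts G - X, {e \<in> edges G. e \<inter> X = {}})"

definition connected_set :: "graph \<Rightarrow> nat set \<Rightarrow> bool" where
  "connected_set G S \<longleftrightarrow> S \<noteq> {} \<and> S \<subseteq> verts G \<and>
     (\<forall>u\<in>S. \<forall>v\<in>S. (u, v) \<in> (adj G \<inter> (S \<times> S))\<^sup>*)"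

definition cc :: "graph \<Rightarrow> nat set set" where
  "cc G = {{v. (u, v) \<in> (adj G)\<^sup>*} | u. u \<in> verts G}"

definition nbh :: "graph \<Rightarrow> nat set \<Rightarrow> nat set" where
  "nbh G C = {v \<in> verts G - C. \<exists>c\<in>C. {c, v} \<in> edges G}"

definition minor :: "graph \<Rightarrow> graph \<Rightarrow> bool" where
  "minor H G \<longleftrightarrow> (\<exists>\<phi> :: nat \<Rightarrow> nat set.
     (\<forall>v\<in>verts H. connected_set G (\<phi> v)) \<and>
     (\<forall>u\<in>verts H. \<forall>v\<in>verts H. u \<noteq> v \<longrightarrow> \<phi> u \<inter> \<phi> v = {}) \<and>
     (\<forall>u v. {u, v} \<in> edges H \<longrightarrow> (\<exists>x\<in>\<phi> u. \<exists>y\<in>\<phi> v. {x, y} \<in> edges G)))"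

definition planar :: "graph \<Rightarrow> bool" where
  "planar G \<longleftrightarrow> (\<exists>(f :: nat \<Rightarrow> complex) (\<gamma> :: nat set \<Rightarrow> real \<Rightarrow> complex).
     inj_on f (verts G) \<and>
     (\<forall>e\<in>edges G. arc (\<gamma> e) \<and> {pathstart (\<gamma> e), pathfinish (\<gamma> e)} = f ` e \<and>
        path_image (\<gamma> e) \<inter> f ` verts G = f ` e) \<and>
     (\<forall>e\<in>edges G. \<forall>e'\<in>edges G. e \<noteq> e' \<longrightarrow>
        path_image (\<gamma> e) \<inter> path_image (\<gamma> e') \<subseteq> f ` (e \<inter> e')))"

definition apex :: "graph \<Rightarrow> bool" where
  "apex G \<longleftrightarrow> (\<exists>v\<in>verts G. planar (delete_verts G {v}))"

definition minor_closed :: "graph set \<Rightarrow> bool" where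
  "minor_closed \<C> \<longleftrightarrow> (\<forall>G\<in>\<C>. \<forall>H. wf_graph H \<and> minor H G \<longrightarrow> H \<in> \<C>)"

definition apex_minor_free :: "graph set \<Rightarrow> bool" where
  "apex_minor_free \<C> \<longleftrightarrow> (\<forall>G\<in>\<C>. wf_graph G) \<and> minor_closed \<C> \<and>
     (\<exists>A. wf_graph A \<and> apex A \<and> (\<forall>G\<in>\<C>. \<not> minor A G))"

end

theory Submission
  imports Defs
begin


definition nb :: "graph \<Rightarrow> nat \<Rightarrow> nat set" where
  "nb H v = {w. {v,w} \<in> edges H}"

definition induced :: "graph \<Rightarrow> nat set \<Rightarrow> graph" where
  "induced H S = (S, {e \<in> edges H. e \<subseteq> S})"

definition contract :: "graph \<Rightarrow> nat \<Rightarrow> nat \<Rightarrow> graph" where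
  "contract H x y = (verts H - {y}, {e \<in> edges H. y \<notin> e} \<union> {{x,w} | w. {y,w} \<in> edges H \<and> w \<noteq> x})"

definition Kg :: "nat \<Rightarrow> graph" where
  "Kg n = ({0..<n}, {{i,j} | i j. i < n \<and> j < n \<and> i \<noteq> j})"

lemma adj_sym: "(u,v) \<in> adj G \<Longrightarrow> (v,u) \<in> adj G"
  by (simp add: adj_def insert_commute)

lemma wf_edge: "wf_graph G \<Longrightarrow> {u,v} \<in> edges G \<Longrightarrow> u \<in> verts G \<and> v \<in> verts G \<and> u \<noteq> v"
proof -
  assume a: "wf_graph G" "{u,v} \<in> edges G"
  then have "{u,v} \<subseteq> verts G" "card {u,v} = 2" unfolding wf_graph_def by auto
  then show ?thesis by (cases "u = v") auto
qed

lemma connected_single: "v \<in> verts G \<Longrightarrow> connected_set G {v}"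
  unfolding connected_set_def by auto

lemma minor_refl: "wf_graph G \<Longrightarrow> minor G G"
  unfolding minor_def
  apply (rule exI[of _ "\<lambda>v. {v}"])
  by (auto intro: connected_single)

lemma conn_union_path:
  assumes phi: "\<And>v. v \<in> S \<Longrightarrow> connected_set K (psi v)"
    and edg: "\<And>u v. {u,v} \<in> edges G \<Longrightarrow> \<exists>x\<in>psi u. \<exists>y\<in>psi v. {x,y} \<in> edges K"
    and p: "(u,w) \<in> (adj G \<inter> S \<times> S)\<^sup>*" and uS: "u \<in> S"
  shows "\<forall>a\<in>psi u. \<forall>b\<in>psi w. (a,b) \<in> (adj K \<inter> (\<Union>(psi ` S)) \<times> (\<Union>(psi ` S)))\<^sup>*"
  using p
proof (induction rule: rtrancl_induct)
  case base
  show ?case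
  proof (intro ballI)
    fix a b assume "a \<in> psi u" "b \<in> psi u"
    then have "(a,b) \<in> (adj K \<inter> psi u \<times> psi u)\<^sup>*" using phi[OF uS] unfolding connected_set_def by blast
    moreover have "adj K \<inter> psi u \<times> psi u \<subseteq> adj K \<inter> (\<Union>(psi ` S)) \<times> (\<Union>(psi ` S))" using uS by blast
    ultimately show "(a,b) \<in> (adj K \<inter> (\<Union>(psi ` S)) \<times> (\<Union>(psi ` S)))\<^sup>*" using rtrancl_mono by blast
  qed
next
  case (step w z)
  let ?T = "\<Union>(psi ` S)"
  have wz: "{w,z} \<in> edges G" "w \<in> S" "z \<in> S" using step.hyps(2) by (auto simp: adj_def)
  obtain p q where pq: "p \<in> psi w" "q \<in> psi z" "{p,q} \<in> edges K" using edg[OF wz(1)] by blast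
  show ?case
  proof (intro ballI)
    fix a b assume a: "a \<in> psi u" and b: "b \<in> psi z"
    have 1: "(a,p) \<in> (adj K \<inter> ?T \<times> ?T)\<^sup>*" using step.IH a pq by blast
    have 2: "(p,q) \<in> adj K \<inter> ?T \<times> ?T" using pq wz by (auto simp: adj_def)
    have "(q,b) \<in> (adj K \<inter> psi z \<times> psi z)\<^sup>*" using phi[OF wz(3)] pq b unfolding connected_set_def by blast
    moreover have "adj K \<inter> psi z \<times> psi z \<subseteq> adj K \<inter> ?T \<times> ?T" using wz by blast
    ultimately have 3: "(q,b) \<in> (adj K \<inter> ?T \<times> ?T)\<^sup>*" using rtrancl_mono by blast
    show "(a,b) \<in> (adj K \<inter> ?T \<times> ?T)\<^sup>*" using 1 2 3
      by (meson rtrancl.rtrancl_into_rtrancl rtrancl_trans)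
  qed
qed

lemma minor_trans:
  assumes "minor H G" "minor G K" shows "minor H K"
proof -
  obtain phi where phi: "\<forall>v\<in>verts H. connected_set G (phi v)"
    "\<forall>u\<in>verts H. \<forall>v\<in>verts H. u \<noteq> v \<longrightarrow> phi u \<inter> phi v = {}"
    "\<forall>u v. {u, v} \<in> edges H \<longrightarrow> (\<exists>x\<in>phi u. \<exists>y\<in>phi v. {x, y} \<in> edges G)"
    using assms(1) unfolding minor_def by blast
  obtain psi where psi: "\<forall>v\<in>verts G. connected_set K (psi v)"
    "\<forall>u\<in>verts G. \<forall>v\<in>verts G. u \<noteq> v \<longrightarrow> psi u \<inter> psi v = {}"
    "\<forall>u v. {u, v} \<in> edges G \<longrightarrow> (\<exists>x\<in>psi u. \<exists>y\<in>psi v. {x, y} \<in> edges K)"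
    using assms(2) unfolding minor_def by blast
  define chi where "chi v = \<Union>(psi ` phi v)" for v
  have "\<forall>v\<in>verts H. connected_set K (chi v)"
  proof
    fix v assume v: "v \<in> verts H"
    have sub: "phi v \<subseteq> verts G" "phi v \<noteq> {}" using phi(1) v unfolding connected_set_def by auto
    have c: "\<And>w. w \<in> phi v \<Longrightarrow> connected_set K (psi w)" using psi(1) sub by blast
    show "connected_set K (chi v)" unfolding connected_set_def
    proof (intro conjI ballI)
      have cs: "\<And>w. w \<in> phi v \<Longrightarrow> psi w \<noteq> {} \<and> psi w \<subseteq> verts K"
        using c unfolding connected_set_def by simp
      show "chi v \<noteq> {}" using sub cs unfolding chi_def by auto
      show "chi v \<subseteq> verts K" using cs unfolding chi_def by auto
      fix a b assume a: "a \<in> chi v" and b: "b \<in> chi v"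
      obtain u w where uw: "u \<in> phi v" "w \<in> phi v" "a \<in> psi u" "b \<in> psi w" using a b unfolding chi_def by blast
      have "(u,w) \<in> (adj G \<inter> phi v \<times> phi v)\<^sup>*" using phi(1) v uw unfolding connected_set_def by blast
      have e: "\<And>u v. {u,v} \<in> edges G \<Longrightarrow> \<exists>x\<in>psi u. \<exists>y\<in>psi v. {x,y} \<in> edges K"
        using psi(3) by blast
      have "\<forall>a\<in>psi u. \<forall>b\<in>psi w. (a,b) \<in> (adj K \<inter> (\<Union>(psi ` phi v)) \<times> (\<Union>(psi ` phi v)))\<^sup>*"
        by (rule conn_union_path[OF c e \<open>(u,w) \<in> _\<close> uw(1)])
      then show "(a,b) \<in> (adj K \<inter> chi v \<times> chi v)\<^sup>*" unfolding chi_def using uw(3,4) by blast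
    qed
  qed
  moreover have "\<forall>u\<in>verts H. \<forall>v\<in>verts H. u \<noteq> v \<longrightarrow> chi u \<inter> chi v = {}"
  proof (intro ballI impI)
    fix u v assume u: "u \<in> verts H" and v: "v \<in> verts H" and ne: "u \<noteq> v"
    have d: "phi u \<inter> phi v = {}" using phi(2) u v ne by blast
    have s: "phi u \<subseteq> verts G" "phi v \<subseteq> verts G" using phi(1) u v unfolding connected_set_def by auto
    show "chi u \<inter> chi v = {}" unfolding chi_def
    proof (rule ccontr)
      assume "\<Union> (psi ` phi u) \<inter> \<Union> (psi ` phi v) \<noteq> {}"
      then obtain a b z where "a \<in> phi u" "b \<in> phi v" "z \<in> psi a" "z \<in> psi b" by blast
      moreover have "a \<noteq> b" using calculation d by blast
      moreover have "a \<in> verts G" "b \<in> verts G" using calculation s by auto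
      ultimately show False using psi(2) by blast
    qed
  qed
  moreover have "\<forall>u v. {u, v} \<in> edges H \<longrightarrow> (\<exists>x\<in>chi u. \<exists>y\<in>chi v. {x, y} \<in> edges K)"
  proof (intro allI impI)
    fix u v assume "{u,v} \<in> edges H"
    then obtain x y where "x \<in> phi u" "y \<in> phi v" "{x,y} \<in> edges G" using phi(3) by blast
    then show "\<exists>x\<in>chi u. \<exists>y\<in>chi v. {x, y} \<in> edges K" using psi(3) unfolding chi_def by blast
  qed
  ultimately show ?thesis unfolding minor_def by blast
qed



lemma wf_finite_edges: "wf_graph H \<Longrightarrow> finite (edges H)"
proof -
  assume "wf_graph H"
  then have "edges H \<subseteq> Pow (verts H)" "finite (verts H)" unfolding wf_graph_def by auto
  then show ?thesis by (meson finite_Pow_iff finite_subset)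
qed

lemma wf_edge_card: "wf_graph H \<Longrightarrow> e \<in> edges H \<Longrightarrow> \<exists>a b. e = {a,b} \<and> a \<noteq> b"
proof -
  assume "wf_graph H" "e \<in> edges H"
  then have "card e = 2" unfolding wf_graph_def by blast
  then show ?thesis by (simp add: card_2_iff)
qed

lemma nb_sub: "wf_graph H \<Longrightarrow> nb H v \<subseteq> verts H"
  unfolding nb_def using wf_edge by blast

lemma nb_finite: "wf_graph H \<Longrightarrow> finite (nb H v)"
proof -
  assume a: "wf_graph H"
  then have "finite (verts H)" unfolding wf_graph_def by blast
  then show ?thesis using nb_sub[OF a] finite_subset by blast
qed

lemma nb_not_self: "wf_graph H \<Longrightarrow> v \<notin> nb H v"
  unfolding nb_def using wf_edge by blast

lemma card_nb_edges: assumes "wf_graph H"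
  shows "card (nb H v) = card {e \<in> edges H. v \<in> e}"
proof -
  have "bij_betw (\<lambda>w. {v,w}) (nb H v) {e \<in> edges H. v \<in> e}"
  proof (rule bij_betwI')
    fix a b assume "a \<in> nb H v" "b \<in> nb H v"
    then show "({v,a} = {v,b}) = (a = b)" using nb_not_self[OF assms] by (auto simp: doubleton_eq_iff)
  next
    fix a assume "a \<in> nb H v" then show "{v,a} \<in> {e \<in> edges H. v \<in> e}" by (auto simp: nb_def)
  next
    fix e assume "e \<in> {e \<in> edges H. v \<in> e}"
    then obtain a b where "e = {a,b}" "a \<noteq> b" "e \<in> edges H" "v \<in> e" using wf_edge_card[OF assms] by blast
    then show "\<exists>w\<in>nb H v. e = {v,w}" unfolding nb_def by (auto simp: insert_commute)
  qed
  then show ?thesis by (rule bij_betw_same_card)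
qed

lemma handshake: assumes "wf_graph H"
  shows "(\<Sum>v\<in>verts H. card (nb H v)) = 2 * card (edges H)"
proof -
  have fE: "finite (edges H)" using wf_finite_edges[OF assms] .
  have fV: "finite (verts H)" using assms unfolding wf_graph_def by simp
  have "(\<Sum>v\<in>verts H. card (nb H v)) = (\<Sum>v\<in>verts H. card {e \<in> edges H. v \<in> e})"
    using card_nb_edges[OF assms] by simp
  also have "\<dots> = (\<Sum>v\<in>verts H. \<Sum>e\<in>edges H. if v \<in> e then 1 else 0)"
  proof (rule sum.cong)
    fix v show "card {e \<in> edges H. v \<in> e} = (\<Sum>e\<in>edges H. if v \<in> e then 1 else (0::nat))"
    proof -
      have "(\<Sum>e\<in>edges H. if v \<in> e then 1 else 0) = (\<Sum>e\<in>{e \<in> edges H. v \<in> e}. (1::nat))"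
        by (rule sum.inter_filter[OF fE, symmetric])
      then show ?thesis by simp
    qed
  qed simp
  also have "\<dots> = (\<Sum>e\<in>edges H. \<Sum>v\<in>verts H. if v \<in> e then 1 else 0)"
    by (rule sum.swap)
  also have "\<dots> = (\<Sum>e\<in>edges H. 2)"
  proof (rule sum.cong)
    fix e assume eE: "e \<in> edges H"
    then have es: "e \<subseteq> verts H" "card e = 2" using assms unfolding wf_graph_def by auto
    have "(\<Sum>v\<in>verts H. if v \<in> e then 1 else 0) = (\<Sum>v\<in>{v \<in> verts H. v \<in> e}. (1::nat))"
      by (rule sum.inter_filter[OF fV, symmetric])
    also have "{v \<in> verts H. v \<in> e} = e" using es by blast
    finally show "(\<Sum>v\<in>verts H. if v \<in> e then 1 else 0) = (2::nat)" using es by simp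
  qed simp
  finally show ?thesis by simp
qed

lemma induced_wf: "wf_graph H \<Longrightarrow> S \<subseteq> verts H \<Longrightarrow> wf_graph (induced H S)"
  unfolding wf_graph_def induced_def verts_def edges_def by (auto intro: finite_subset)

lemma induced_minor: assumes "wf_graph H" "S \<subseteq> verts H" shows "minor (induced H S) H"
  unfolding minor_def
proof (rule exI[of _ "\<lambda>v. {v}"], intro conjI ballI allI impI)
  fix v assume "v \<in> verts (induced H S)"
  then show "connected_set H {v}" using assms by (intro connected_single) (auto simp: induced_def verts_def)
next
  fix u v assume "{u,v} \<in> edges (induced H S)"
  then show "\<exists>x\<in>{u}. \<exists>y\<in>{v}. {x, y} \<in> edges H" by (auto simp: induced_def edges_def)
qed auto

lemma contract_verts: "verts (contract H x y) = verts H - {y}"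
  by (simp add: contract_def verts_def)

lemma contract_edges: "edges (contract H x y) = {e \<in> edges H. y \<notin> e} \<union> {{x,w} | w. {y,w} \<in> edges H \<and> w \<noteq> x}"
  by (simp add: contract_def edges_def)

lemma contract_wf: assumes "wf_graph H" "{x,y} \<in> edges H" shows "wf_graph (contract H x y)"
proof -
  have xy: "x \<in> verts H" "y \<in> verts H" "x \<noteq> y" using wf_edge[OF assms] by auto
  have fin: "finite (verts (contract H x y))" using assms(1) by (simp add: contract_verts wf_graph_def)
  have "\<forall>e\<in>edges (contract H x y). e \<subseteq> verts (contract H x y) \<and> card e = 2"
  proof
    fix e assume "e \<in> edges (contract H x y)"
    then consider "e \<in> edges H" "y \<notin> e" | w where "e = {x,w}" "{y,w} \<in> edges H" "w \<noteq> x"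
      unfolding contract_edges by blast
    then show "e \<subseteq> verts (contract H x y) \<and> card e = 2"
    proof cases
      case 1 then show ?thesis using assms(1) unfolding wf_graph_def contract_verts by auto
    next
      case 2
      then have "w \<in> verts H" "w \<noteq> y" using wf_edge[OF assms(1) 2(2)] by auto
      then show ?thesis using 2 xy by (auto simp: contract_verts)
    qed
  qed
  then show ?thesis using fin unfolding wf_graph_def by blast
qed

lemma contract_minor: assumes "wf_graph H" "{x,y} \<in> edges H" shows "minor (contract H x y) H"
proof -
  have xy: "x \<in> verts H" "y \<in> verts H" "x \<noteq> y" using wf_edge[OF assms] by auto
  define phi where "phi v = (if v = x then {x,y} else {v})" for v
  have self: "\<And>v. v \<in> phi v" unfolding phi_def by auto
  have yx: "y \<in> phi x" unfolding phi_def by auto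
  have c1: "connected_set H {x,y}" unfolding connected_set_def
  proof (intro conjI ballI)
    fix a b assume "a \<in> {x,y}" "b \<in> {x,y}"
    moreover have "(x,y) \<in> adj H \<inter> {x,y} \<times> {x,y}" "(y,x) \<in> adj H \<inter> {x,y} \<times> {x,y}"
      using assms(2) by (auto simp: adj_def insert_commute)
    ultimately show "(a,b) \<in> (adj H \<inter> {x,y} \<times> {x,y})\<^sup>*" by auto
  qed (use xy in auto)
  show ?thesis unfolding minor_def
  proof (rule exI[of _ phi], intro conjI ballI allI impI)
    fix v assume "v \<in> verts (contract H x y)"
    then show "connected_set H (phi v)" using c1 xy
      by (auto simp: phi_def contract_verts intro: connected_single)
  next
    fix u v assume "u \<in> verts (contract H x y)" "v \<in> verts (contract H x y)" "u \<noteq> v"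
    then show "phi u \<inter> phi v = {}" by (auto simp: phi_def contract_verts)
  next
    fix u v assume e: "{u,v} \<in> edges (contract H x y)"
    then consider "{u,v} \<in> edges H" | w where "{u,v} = {x,w}" "{y,w} \<in> edges H"
      unfolding contract_edges by blast
    then show "\<exists>a\<in>phi u. \<exists>b\<in>phi v. {a,b} \<in> edges H"
    proof cases
      case 1 then show ?thesis using self by blast
    next
      case 2
      then have "(u = x \<and> v = w) \<or> (u = w \<and> v = x)" by (auto simp: doubleton_eq_iff)
      then show ?thesis
      proof
        assume "u = x \<and> v = w" then show ?thesis using yx self 2(2) by blast
      next
        assume "u = w \<and> v = x" then show ?thesis using yx self 2(2) by (metis insert_commute)
      qed
    qed
  qed
qed



lemma Kg_verts: "verts (Kg n) = {0..<n}" by (simp add: Kg_def verts_def)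

lemma Kg_edge: "{u,v} \<in> edges (Kg n) \<longleftrightarrow> u < n \<and> v < n \<and> u \<noteq> v"
proof
  assume "{u,v} \<in> edges (Kg n)"
  then obtain i j where "{u,v} = {i,j}" "i < n" "j < n" "i \<noteq> j" by (auto simp: Kg_def edges_def)
  then show "u < n \<and> v < n \<and> u \<noteq> v" by (auto simp: doubleton_eq_iff)
qed (auto simp: Kg_def edges_def)

lemma minor_K0: "minor (Kg 0) G"
  unfolding minor_def by (auto simp: Kg_verts Kg_edge)

lemma connected_induced:
  assumes "connected_set (induced H S) T" "S \<subseteq> verts H"
  shows "connected_set H T"
proof -
  have a: "adj (induced H S) \<subseteq> adj H" by (auto simp: adj_def induced_def edges_def)
  have T: "T \<noteq> {}" "T \<subseteq> S" using assms(1) unfolding connected_set_def by (auto simp: induced_def verts_def)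
  have "\<forall>u\<in>T. \<forall>v\<in>T. (u,v) \<in> (adj (induced H S) \<inter> T \<times> T)\<^sup>*" using assms(1) unfolding connected_set_def by simp
  moreover have "adj (induced H S) \<inter> T \<times> T \<subseteq> adj H \<inter> T \<times> T" using a by blast
  ultimately have "\<forall>u\<in>T. \<forall>v\<in>T. (u,v) \<in> (adj H \<inter> T \<times> T)\<^sup>*" using rtrancl_mono by blast
  then show ?thesis unfolding connected_set_def using T assms(2) by blast
qed

lemma K_lift:
  assumes wf: "wf_graph H" and x: "x \<in> verts H" and m: "minor (Kg r) (induced H (nb H x))"
  shows "minor (Kg (Suc r)) H"
proof -
  let ?S = "nb H x"
  have S: "?S \<subseteq> verts H" "x \<notin> ?S" using nb_sub[OF wf] nb_not_self[OF wf] by auto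
  obtain phi where phi: "\<forall>v\<in>verts (Kg r). connected_set (induced H ?S) (phi v)"
    "\<forall>u\<in>verts (Kg r). \<forall>v\<in>verts (Kg r). u \<noteq> v \<longrightarrow> phi u \<inter> phi v = {}"
    "\<forall>u v. {u, v} \<in> edges (Kg r) \<longrightarrow> (\<exists>a\<in>phi u. \<exists>b\<in>phi v. {a, b} \<in> edges (induced H ?S))"
    using m unfolding minor_def by blast
  have sub: "\<And>i. i < r \<Longrightarrow> phi i \<subseteq> ?S \<and> phi i \<noteq> {}"
  proof -
    fix i assume "i < r"
    then have "connected_set (induced H ?S) (phi i)" using phi(1) by (simp add: Kg_verts)
    then show "phi i \<subseteq> ?S \<and> phi i \<noteq> {}" unfolding connected_set_def by (simp add: induced_def verts_def)
  qed
  define psi where "psi i = (if i = r then {x} else phi i)" for i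
  show ?thesis unfolding minor_def
  proof (rule exI[of _ psi], intro conjI ballI allI impI)
    fix v assume "v \<in> verts (Kg (Suc r))"
    then have v: "v < Suc r" by (simp add: Kg_verts)
    show "connected_set H (psi v)"
    proof (cases "v = r")
      case True then show ?thesis using x by (simp add: psi_def connected_single)
    next
      case False
      then have "v < r" using v by simp
      then have "connected_set (induced H ?S) (phi v)" using phi(1) by (simp add: Kg_verts)
      then show ?thesis using False S(1) connected_induced by (simp add: psi_def)
    qed
  next
    fix u v assume "u \<in> verts (Kg (Suc r))" "v \<in> verts (Kg (Suc r))" "u \<noteq> v"
    then have uv: "u < Suc r" "v < Suc r" "u \<noteq> v" by (auto simp: Kg_verts)
    show "psi u \<inter> psi v = {}"
    proof (cases "u = r")
      case True then show ?thesis using uv sub[of v] S(2) by (auto simp: psi_def)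
    next
      case False
      show ?thesis
      proof (cases "v = r")
        case True then show ?thesis using uv sub[of u] S(2) False by (auto simp: psi_def)
      next
        case False2: False
        then show ?thesis using phi(2) uv False by (auto simp: psi_def Kg_verts)
      qed
    qed
  next
    fix u v assume "{u,v} \<in> edges (Kg (Suc r))"
    then have uv: "u < Suc r" "v < Suc r" "u \<noteq> v" by (auto simp: Kg_edge)
    show "\<exists>a\<in>psi u. \<exists>b\<in>psi v. {a, b} \<in> edges H"
    proof (cases "u = r")
      case True
      then have "v < r" using uv by simp
      then obtain w where "w \<in> phi v" "w \<in> ?S" using sub[of v] by blast
      then show ?thesis using True uv by (auto simp: psi_def nb_def)
    next
      case False
      show ?thesis
      proof (cases "v = r")
        case True
        then have "u < r" using uv False by simp
        then obtain w where "w \<in> phi u" "w \<in> ?S" using sub[of u] by blast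
        then have "{w,x} \<in> edges H" by (simp add: nb_def insert_commute)
        then show ?thesis using True False \<open>w \<in> phi u\<close> by (auto simp: psi_def)
      next
        case False2: False
        then have "{u,v} \<in> edges (Kg r)" using uv False by (simp add: Kg_edge)
        then obtain a b where "a \<in> phi u" "b \<in> phi v" "{a,b} \<in> edges (induced H ?S)" using phi(3) by blast
        then show ?thesis using False False2 by (auto simp: psi_def induced_def edges_def)
      qed
    qed
  qed
qed

lemma contract_count:
  assumes wf: "wf_graph H" and e: "{x,y} \<in> edges H"
  shows "card (edges H) \<le> card (edges (contract H x y)) + 1 + card (nb H x \<inter> nb H y)"
proof -
  have xy: "x \<noteq> y" using wf_edge[OF wf e] by simp
  define A where "A = {e \<in> edges H. y \<notin> e}"
  define Ey where "Ey = {e \<in> edges H. y \<in> e}"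
  define W where "W = nb H y - {x} - nb H x"
  have fE: "finite (edges H)" using wf_finite_edges[OF wf] .
  have fE': "finite (edges (contract H x y))" using wf_finite_edges[OF contract_wf[OF wf e]] .
  have fn: "finite (nb H y)" "finite (nb H x)" using nb_finite[OF wf] by auto
  have "edges H = A \<union> Ey" unfolding A_def Ey_def by blast
  then have 1: "card (edges H) \<le> card A + card Ey" by (metis card_Un_le)
  have 2: "card Ey = card (nb H y)" unfolding Ey_def using card_nb_edges[OF wf] by simp
  have "nb H y \<subseteq> {x} \<union> (nb H x \<inter> nb H y) \<union> W" unfolding W_def by blast
  then have "card (nb H y) \<le> card ({x} \<union> (nb H x \<inter> nb H y) \<union> W)"
    by (rule card_mono[rotated]) (use fn in \<open>auto simp: W_def\<close>)
  also have "\<dots> \<le> card ({x} \<union> (nb H x \<inter> nb H y)) + card W" by (rule card_Un_le)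
  also have "\<dots> \<le> 1 + card (nb H x \<inter> nb H y) + card W"
    using card_Un_le[of "{x}" "nb H x \<inter> nb H y"] by simp
  finally have 3: "card (nb H y) \<le> 1 + card (nb H x \<inter> nb H y) + card W" .
  have inj: "inj_on (\<lambda>w. {x,w}) W" unfolding W_def inj_on_def by (auto simp: doubleton_eq_iff)
  have 4: "card ((\<lambda>w. {x,w}) ` W) = card W" using card_image[OF inj] .
  have sub: "A \<union> (\<lambda>w. {x,w}) ` W \<subseteq> edges (contract H x y)"
  proof -
    have "A \<subseteq> edges (contract H x y)" unfolding A_def contract_edges by blast
    moreover have "(\<lambda>w. {x,w}) ` W \<subseteq> edges (contract H x y)"
      unfolding W_def contract_edges nb_def by blast
    ultimately show ?thesis by blast
  qed
  have disj: "A \<inter> (\<lambda>w. {x,w}) ` W = {}" unfolding A_def W_def nb_def by blast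
  have fA: "finite A" unfolding A_def using fE by simp
  have fW: "finite W" unfolding W_def using fn by simp
  have "card A + card W = card (A \<union> (\<lambda>w. {x,w}) ` W)"
    using card_Un_disjoint[OF fA _ disj] fW 4 by simp
  also have "\<dots> \<le> card (edges (contract H x y))" using card_mono[OF fE' sub] .
  finally show ?thesis using 1 2 3 by linarith
qed

lemma nb_inter_card:
  assumes wf: "wf_graph H" and e: "{x,y} \<in> edges H"
  shows "card (nb H x \<inter> nb H y) + 2 \<le> card (verts H)"
proof -
  have xy: "x \<in> verts H" "y \<in> verts H" "x \<noteq> y" using wf_edge[OF wf e] by auto
  have fV: "finite (verts H)" using wf unfolding wf_graph_def by blast
  have "nb H x \<inter> nb H y \<subseteq> verts H - {x,y}" using nb_sub[OF wf] nb_not_self[OF wf] by blast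
  then have "card (nb H x \<inter> nb H y) \<le> card (verts H - {x,y})" using fV by (intro card_mono) auto
  also have "\<dots> = card (verts H) - 2" using xy fV by (simp add: card_Diff_subset)
  finally have a: "card (nb H x \<inter> nb H y) \<le> card (verts H) - 2" .
  have "card {x,y} \<le> card (verts H)" using xy fV by (intro card_mono) auto
  then have "2 \<le> card (verts H)" using xy by simp
  then show ?thesis using a by linarith
qed



lemma nb_induced: "y \<in> S \<Longrightarrow> nb (induced H S) y = nb H y \<inter> S"
  by (auto simp: nb_def induced_def edges_def)

lemma mader_step:
  assumes IH: "\<And>G' H'. wf_graph G' \<Longrightarrow> wf_graph H' \<Longrightarrow> minor H' G' \<Longrightarrow>
      2^r * card (verts H') \<le> card (edges H') \<Longrightarrow> edges H' \<noteq> {} \<Longrightarrow> minor (Kg r) G'"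
  shows "wf_graph G \<Longrightarrow> wf_graph H \<Longrightarrow> minor H G \<Longrightarrow>
      2^(Suc r) * card (verts H) \<le> card (edges H) \<Longrightarrow> edges H \<noteq> {} \<Longrightarrow> minor (Kg (Suc r)) G"
proof (induction "card (verts H)" arbitrary: H rule: less_induct)
  case less
  note wf = less.prems(2)
  obtain e0 where e0: "e0 \<in> edges H" using less.prems(5) by blast
  obtain x y0 where xy0: "e0 = {x,y0}" "x \<noteq> y0" using wf_edge_card[OF wf e0] by blast
  have x: "x \<in> verts H" using wf_edge[OF wf] e0 xy0 by blast
  have y0: "y0 \<in> nb H x" using e0 xy0 by (simp add: nb_def)
  let ?P = "(2::nat)^(Suc r)"
  show ?case
  proof (cases "\<exists>y\<in>nb H x. card (nb H x \<inter> nb H y) < ?P")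
    case True
    then obtain y where y: "y \<in> nb H x" "card (nb H x \<inter> nb H y) < ?P" by blast
    have exy: "{x,y} \<in> edges H" using y(1) by (simp add: nb_def)
    let ?H = "contract H x y"
    have wf': "wf_graph ?H" using contract_wf[OF wf exy] .
    have mi: "minor ?H G" using minor_trans[OF contract_minor[OF wf exy] less.prems(3)] .
    have fV: "finite (verts H)" using wf unfolding wf_graph_def by blast
    have yV: "y \<in> verts H" using wf_edge[OF wf exy] by blast
    have cV: "card (verts ?H) = card (verts H) - 1" using fV yV by (simp add: contract_verts)
    have "0 < card (verts H)" using fV yV by (auto simp: card_gt_0_iff)
    then have lt: "card (verts ?H) < card (verts H)" using cV by simp
    have cnt: "card (edges H) \<le> card (edges ?H) + 1 + card (nb H x \<inter> nb H y)"
      using contract_count[OF wf exy] .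
    have two: "card (nb H x \<inter> nb H y) + 2 \<le> card (verts H)" using nb_inter_card[OF wf exy] .
    have big: "?P * card (verts H) \<le> card (edges H)" using less.prems(4) .
    have pd: "?P * (card (verts H) - 1) = ?P * card (verts H) - ?P" by (simp add: diff_mult_distrib2)
    have Pge: "?P * card (verts H) \<ge> card (verts H)" by simp
    have ne: "edges ?H \<noteq> {}"
    proof
      assume "edges ?H = {}"
      then show False using cnt two big Pge by simp
    qed
    have "?P * card (verts ?H) \<le> card (edges ?H)" using cV pd cnt big y(2) by simp
    then show ?thesis using less.hyps[OF lt less.prems(1) wf' mi _ ne] by simp
  next
    case False
    then have tb: "\<And>y. y \<in> nb H x \<Longrightarrow> ?P \<le> card (nb H x \<inter> nb H y)" by (simp add: not_less)
    let ?S = "nb H x"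
    let ?HS = "induced H ?S"
    have Ssub: "?S \<subseteq> verts H" using nb_sub[OF wf] .
    have wfS: "wf_graph ?HS" using induced_wf[OF wf Ssub] .
    have fS: "finite ?S" using nb_finite[OF wf] .
    have vS: "verts ?HS = ?S" by (simp add: induced_def verts_def)
    have "(\<Sum>v\<in>?S. ?P) \<le> (\<Sum>v\<in>?S. card (nb ?HS v))"
    proof (rule sum_mono)
      fix v assume v: "v \<in> ?S"
      have "nb ?HS v = nb H v \<inter> ?S" using nb_induced[OF v] .
      then show "?P \<le> card (nb ?HS v)" using tb[OF v] by (simp add: Int_commute)
    qed
    also have "\<dots> = 2 * card (edges ?HS)" using handshake[OF wfS] vS by simp
    finally have h: "(\<Sum>v\<in>?S. ?P) \<le> 2 * card (edges ?HS)" .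
    have "(\<Sum>v\<in>?S. ?P) = 2 * (2^r * card ?S)" by simp
    then have dens: "2^r * card ?S \<le> card (edges ?HS)" using h by linarith
    have "0 < card ?S" using y0 fS by (auto simp: card_gt_0_iff)
    moreover have "card ?S \<le> 2^r * card ?S" by simp
    ultimately have "card (edges ?HS) \<ge> 1" using dens by linarith
    then have neS: "edges ?HS \<noteq> {}" by auto
    have "minor (Kg r) ?HS" using IH[OF wfS wfS minor_refl[OF wfS]] vS dens neS by simp
    then have "minor (Kg (Suc r)) H" using K_lift[OF wf x] by simp
    then show ?thesis using minor_trans less.prems(3) by blast
  qed
qed

lemma mader:
  "wf_graph G \<Longrightarrow> wf_graph H \<Longrightarrow> minor H G \<Longrightarrow>
      2^r * card (verts H) \<le> card (edges H) \<Longrightarrow> edges H \<noteq> {} \<Longrightarrow> minor (Kg r) G"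
proof (induction r arbitrary: G H)
  case 0 then show ?case by (simp add: minor_K0)
next
  case (Suc r)
  show ?case by (rule mader_step[OF Suc.IH Suc.prems])
qed



definition sparse :: "nat \<Rightarrow> graph \<Rightarrow> bool" where
  "sparse c H \<longleftrightarrow> (\<forall>F. wf_graph F \<and> minor F H \<longrightarrow> card (edges F) \<le> c * card (verts F))"

definition clique :: "graph \<Rightarrow> nat set \<Rightarrow> bool" where
  "clique H S \<longleftrightarrow> S \<subseteq> verts H \<and> (\<forall>a\<in>S. \<forall>b\<in>S. a \<noteq> b \<longrightarrow> {a,b} \<in> edges H)"

lemma sparse_minor: "sparse c H \<Longrightarrow> minor H' H \<Longrightarrow> sparse c H'"
  unfolding sparse_def using minor_trans by blast

lemma sparse_self: "sparse c H \<Longrightarrow> wf_graph H \<Longrightarrow> card (edges H) \<le> c * card (verts H)"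
  unfolding sparse_def using minor_refl by blast

lemma low_deg:
  assumes wf: "wf_graph H" and sp: "sparse c H" and ne: "verts H \<noteq> {}"
  shows "\<exists>v\<in>verts H. card (nb H v) \<le> 2 * c"
proof (rule ccontr)
  assume "\<not> ?thesis"
  then have a: "\<And>v. v \<in> verts H \<Longrightarrow> 2 * c + 1 \<le> card (nb H v)" by force
  have fV: "finite (verts H)" using wf unfolding wf_graph_def by blast
  have "(\<Sum>v\<in>verts H. 2 * c + 1) \<le> (\<Sum>v\<in>verts H. card (nb H v))" using a by (rule sum_mono)
  also have "\<dots> = 2 * card (edges H)" using handshake[OF wf] .
  also have "\<dots> \<le> 2 * (c * card (verts H))" using sparse_self[OF sp wf] by simp
  finally have "(2 * c + 1) * card (verts H) \<le> 2 * c * card (verts H)" by simp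
  moreover have "0 < card (verts H)" using fV ne by (simp add: card_gt_0_iff)
  ultimately show False by (simp add: algebra_simps)
qed

lemma clique_count:
  "wf_graph H \<Longrightarrow> sparse c H \<Longrightarrow> card {S. clique H S} \<le> 2^(2*c+1) * card (verts H) + 1"
proof (induction "card (verts H)" arbitrary: H)
  case 0
  then have "verts H = {}" using wf_graph_def by (simp add: wf_graph_def)
  then have "{S. clique H S} = {{}}" by (auto simp: clique_def)
  then show ?case by simp
next
  case (Suc n)
  note wf = Suc.prems(1)
  have fV: "finite (verts H)" using wf unfolding wf_graph_def by blast
  have ne: "verts H \<noteq> {}" using Suc.hyps(2) by auto
  obtain v where v: "v \<in> verts H" "card (nb H v) \<le> 2 * c" using low_deg[OF wf Suc.prems(2) ne] by blast
  let ?H = "induced H (verts H - {v})"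
  have wf': "wf_graph ?H" using induced_wf[OF wf] by blast
  have sp': "sparse c ?H" using sparse_minor[OF Suc.prems(2) induced_minor[OF wf]] by blast
  have cn: "n = card (verts ?H)" using Suc.hyps(2) v fV by (simp add: induced_def verts_def)
  have IH: "card {S. clique ?H S} \<le> 2^(2*c+1) * n + 1" using Suc.hyps(1)[OF cn wf' sp'] cn by simp
  have sub: "{S. clique H S} \<subseteq> {S. clique ?H S} \<union> Pow (insert v (nb H v))"
  proof
    fix S assume S: "S \<in> {S. clique H S}"
    show "S \<in> {S. clique ?H S} \<union> Pow (insert v (nb H v))"
    proof (cases "v \<in> S")
      case True
      then have "S \<subseteq> insert v (nb H v)" using S by (auto simp: clique_def nb_def)
      then show ?thesis by blast
    next
      case False
      then have "clique ?H S" using S by (auto simp: clique_def induced_def verts_def edges_def)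
      then show ?thesis by blast
    qed
  qed
  have f1: "finite {S. clique ?H S}"
  proof -
    have "{S. clique ?H S} \<subseteq> Pow (verts ?H)" by (auto simp: clique_def)
    moreover have "finite (verts ?H)" using wf' unfolding wf_graph_def by blast
    ultimately show ?thesis by (meson finite_Pow_iff finite_subset)
  qed
  have f2: "finite (Pow (insert v (nb H v)))" using nb_finite[OF wf] by simp
  have "card {S. clique H S} \<le> card ({S. clique ?H S} \<union> Pow (insert v (nb H v)))"
    using card_mono[OF _ sub] f1 f2 by blast
  also have "\<dots> \<le> card {S. clique ?H S} + card (Pow (insert v (nb H v)))" by (rule card_Un_le)
  also have "card (Pow (insert v (nb H v))) = 2 ^ card (insert v (nb H v))"
    using nb_finite[OF wf] by (simp add: card_Pow)
  also have "\<dots> \<le> 2 ^ (2*c+1)"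
  proof (rule power_increasing)
    show "card (insert v (nb H v)) \<le> 2*c+1" using v(2) nb_finite[OF wf] card_insert_le_m1
      by (metis Suc_eq_plus1 card_insert_if le_SucI nat_le_linear not_less_eq_eq)
  qed simp
  finally have a: "card {S. clique H S} \<le> card {S. clique ?H S} + 2 ^ (2*c+1)" by simp
  have "2^(2*c+1) * card (verts H) = 2^(2*c+1) * n + 2^(2*c+1)" using Suc.hyps(2)[symmetric] by simp
  then show ?case using a IH by linarith
qed

lemma A_minor_K:
  assumes "wf_graph A" shows "minor A (Kg (card (verts A)))"
proof -
  have fA: "finite (verts A)" using assms unfolding wf_graph_def by blast
  obtain f where f: "bij_betw f (verts A) {0..<card (verts A)}" using ex_bij_betw_finite_nat[OF fA] by blast
  have fi: "inj_on f (verts A)" "\<And>v. v \<in> verts A \<Longrightarrow> f v < card (verts A)"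
    using f by (auto simp: bij_betw_def)
  show ?thesis unfolding minor_def
  proof (rule exI[of _ "\<lambda>v. {f v}"], intro conjI ballI allI impI)
    fix v assume "v \<in> verts A"
    then show "connected_set (Kg (card (verts A))) {f v}" using fi by (intro connected_single) (simp add: Kg_verts)
  next
    fix u v assume "u \<in> verts A" "v \<in> verts A" "u \<noteq> v"
    then show "{f u} \<inter> {f v} = {}" using fi(1) by (auto simp: inj_on_def)
  next
    fix u v assume e: "{u,v} \<in> edges A"
    then have uv: "u \<in> verts A" "v \<in> verts A" "u \<noteq> v" using wf_edge[OF assms] by auto
    then have "f u \<noteq> f v" using fi(1) by (auto simp: inj_on_def)
    then show "\<exists>x\<in>{f u}. \<exists>y\<in>{f v}. {x, y} \<in> edges (Kg (card (verts A)))"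
      using fi(2) uv by (simp add: Kg_edge)
  qed
qed

lemma sparse_of_free:
  assumes wfA: "wf_graph A" and wfG: "wf_graph G" and no: "\<not> minor A G"
  shows "sparse (2 ^ card (verts A)) G"
  unfolding sparse_def
proof (intro allI impI)
  fix F assume F: "wf_graph F \<and> minor F G"
  let ?r = "card (verts A)"
  show "card (edges F) \<le> 2 ^ ?r * card (verts F)"
  proof (rule ccontr)
    assume "\<not> ?thesis"
    then have "2 ^ ?r * card (verts F) \<le> card (edges F)" "edges F \<noteq> {}" by auto
    then have "minor (Kg ?r) G" using mader[OF wfG] F by blast
    then have "minor A G" using minor_trans[OF A_minor_K[OF wfA]] by blast
    then show False using no by blast
  qed
qed



lemma reduce:
  "wf_graph H \<Longrightarrow> sparse c H \<Longrightarrow> X \<inter> R = {} \<Longrightarrow> verts H = X \<union> R \<Longrightarrow> finite R \<Longrightarrow>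
   (\<forall>r\<in>R. nb H r \<subseteq> X) \<Longrightarrow> (\<forall>r\<in>R. 2 \<le> card (nb H r)) \<Longrightarrow> inj_on (nb H) R \<Longrightarrow>
   card R + card {e \<in> edges H. e \<subseteq> X} \<le> c * card X + (2^(2*c+1) * card X + 1)"
proof (induction "card R" arbitrary: H R rule: less_induct)
  case less
  note wf = less.prems(1) and sp = less.prems(2) and XR = less.prems(3) and V = less.prems(4)
    and fR = less.prems(5) and nbX = less.prems(6) and inj = less.prems(8)
  have fV: "finite (verts H)" using wf unfolding wf_graph_def by blast
  have fX: "finite X" using fV V by simp
  have XV: "X \<subseteq> verts H" using V by simp
  show ?case
  proof (cases "\<exists>r\<in>R. \<exists>a\<in>nb H r. \<exists>b\<in>nb H r. a \<noteq> b \<and> {a,b} \<notin> edges H")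
    case True
    then obtain r a b where r: "r \<in> R" "a \<in> nb H r" "b \<in> nb H r" "a \<noteq> b" "{a,b} \<notin> edges H" by blast
    have ab: "a \<in> X" "b \<in> X" using nbX r by auto
    have rX: "r \<notin> X" using XR r by blast
    have exy: "{a,r} \<in> edges H" using r(2) by (simp add: nb_def insert_commute)
    let ?H = "contract H a r"
    let ?R = "R - {r}"
    have wf': "wf_graph ?H" using contract_wf[OF wf exy] .
    have sp': "sparse c ?H" using sparse_minor[OF sp contract_minor[OF wf exy]] .
    have "0 < card R" using fR r(1) by (auto simp: card_gt_0_iff)
    then have lt: "card ?R < card R" using fR r(1) by simp
    have XR': "X \<inter> ?R = {}" using XR by blast
    have V': "verts ?H = X \<union> ?R" using V rX by (auto simp: contract_verts)
    have nbeq: "\<And>r'. r' \<in> ?R \<Longrightarrow> nb ?H r' = nb H r'"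
    proof -
      fix r' assume r': "r' \<in> ?R"
      have r'X: "r' \<notin> X" "r' \<noteq> r" using r' XR by auto
      show "nb ?H r' = nb H r'"
      proof
        show "nb ?H r' \<subseteq> nb H r'"
        proof
          fix w assume "w \<in> nb ?H r'"
          then have "{r',w} \<in> edges ?H" by (simp add: nb_def)
          then consider "{r',w} \<in> edges H" | w0 where "{r',w} = {a,w0}" "{r,w0} \<in> edges H"
            unfolding contract_edges by blast
          then show "w \<in> nb H r'"
          proof cases
            case 1 then show ?thesis by (simp add: nb_def)
          next
            case 2
            have "w0 \<in> X" using 2(2) nbX r(1) by (auto simp: nb_def)
            then show ?thesis using 2(1) r'X ab by (auto simp: doubleton_eq_iff)
          qed
        qed
      next
        show "nb H r' \<subseteq> nb ?H r'"
        proof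
          fix w assume w: "w \<in> nb H r'"
          then have "w \<in> X" using nbX r' by auto
          then have "r \<notin> {r',w}" using rX r'X by auto
          then show "w \<in> nb ?H r'" using w by (simp add: nb_def contract_edges)
        qed
      qed
    qed
    have c6: "\<forall>r\<in>?R. nb ?H r \<subseteq> X" using nbeq nbX by auto
    have c7: "\<forall>r\<in>?R. 2 \<le> card (nb ?H r)" using nbeq less.prems(7) by auto
    have c8: "inj_on (nb ?H) ?R" using inj nbeq unfolding inj_on_def by auto
    have IH: "card ?R + card {e \<in> edges ?H. e \<subseteq> X} \<le> c * card X + (2^(2*c+1) * card X + 1)"
      using less.hyps[OF lt wf' sp' XR' V' _ c6 c7 c8] fR by simp
    have fE: "finite {e \<in> edges ?H. e \<subseteq> X}" using wf_finite_edges[OF wf'] by simp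
    have subE: "insert {a,b} {e \<in> edges H. e \<subseteq> X} \<subseteq> {e \<in> edges ?H. e \<subseteq> X}"
    proof -
      have "{a,b} \<in> edges ?H" using r(3) r(4) by (auto simp: contract_edges nb_def)
      moreover have "{e \<in> edges H. e \<subseteq> X} \<subseteq> edges ?H" using rX by (auto simp: contract_edges)
      ultimately show ?thesis using ab by auto
    qed
    have "card (insert {a,b} {e \<in> edges H. e \<subseteq> X}) = card {e \<in> edges H. e \<subseteq> X} + 1"
      using r(5) wf_finite_edges[OF wf] by simp
    then have "card {e \<in> edges H. e \<subseteq> X} + 1 \<le> card {e \<in> edges ?H. e \<subseteq> X}"
      using card_mono[OF fE subE] by simp
    moreover have "card R = card ?R + 1" using fR r(1) lt by simp
    ultimately show ?thesis using IH by linarith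
  next
    case False
    let ?F = "induced H X"
    have wfF: "wf_graph ?F" using induced_wf[OF wf XV] .
    have spF: "sparse c ?F" using sparse_minor[OF sp induced_minor[OF wf XV]] .
    have vF: "verts ?F = X" by (simp add: induced_def verts_def)
    have eF: "edges ?F = {e \<in> edges H. e \<subseteq> X}" by (simp add: induced_def edges_def)
    have cl: "nb H ` R \<subseteq> {S. clique ?F S}"
    proof
      fix S assume "S \<in> nb H ` R"
      then obtain r where r: "r \<in> R" "S = nb H r" by blast
      have "S \<subseteq> X" using nbX r by auto
      moreover have "\<forall>a\<in>S. \<forall>b\<in>S. a \<noteq> b \<longrightarrow> {a,b} \<in> edges H" using False r by blast
      ultimately show "S \<in> {S. clique ?F S}" by (auto simp: clique_def vF eF)
    qed
    have fcl: "finite {S. clique ?F S}"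
    proof -
      have "{S. clique ?F S} \<subseteq> Pow X" by (auto simp: clique_def vF)
      then show ?thesis using fX by (meson finite_Pow_iff finite_subset)
    qed
    have "card R = card (nb H ` R)" using card_image[OF inj] by simp
    also have "\<dots> \<le> card {S. clique ?F S}" using card_mono[OF fcl cl] .
    also have "\<dots> \<le> 2^(2*c+1) * card X + 1" using clique_count[OF wfF spF] vF by simp
    finally have a: "card R \<le> 2^(2*c+1) * card X + 1" .
    have "card {e \<in> edges H. e \<subseteq> X} \<le> c * card X" using sparse_self[OF spF wfF] vF eF by simp
    then show ?thesis using a by linarith
  qed
qed



definition comp :: "graph \<Rightarrow> nat set \<Rightarrow> nat \<Rightarrow> nat set" where
  "comp G X u = {v. (u,v) \<in> (adj (delete_verts G X))\<^sup>*}"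

lemma adjD: "(u,v) \<in> adj (delete_verts G X) \<longleftrightarrow> {u,v} \<in> edges G \<and> u \<notin> X \<and> v \<notin> X"
  by (auto simp: adj_def delete_verts_def edges_def)

lemma cc_eq: "cc (delete_verts G X) = {comp G X u | u. u \<in> verts G - X}"
  by (simp add: cc_def comp_def delete_verts_def verts_def)

lemma sym_adj: "sym (adj H)" unfolding sym_def using adj_sym by blast

lemma comp_self: "u \<in> comp G X u" by (simp add: comp_def)

lemma comp_sub: assumes wf: "wf_graph G" and u: "u \<in> verts G - X" shows "comp G X u \<subseteq> verts G - X"
proof
  fix v assume "v \<in> comp G X u"
  then have "(u,v) \<in> (adj (delete_verts G X))\<^sup>*" by (simp add: comp_def)
  then show "v \<in> verts G - X"
  proof (induction rule: rtrancl_induct)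
    case base then show ?case using u .
  next
    case (step w z)
    then show ?case using wf_edge[OF wf] by (auto simp: adjD)
  qed
qed

lemma comp_eq: assumes "v \<in> comp G X u" shows "comp G X v = comp G X u"
proof -
  let ?R = "adj (delete_verts G X)"
  have uv: "(u,v) \<in> ?R\<^sup>*" using assms by (simp add: comp_def)
  have vu: "(v,u) \<in> ?R\<^sup>*" using symD[OF sym_rtrancl[OF sym_adj] uv] .
  show ?thesis unfolding comp_def using uv vu by (auto intro: rtrancl_trans)
qed

lemma comp_connected: assumes wf: "wf_graph G" and u: "u \<in> verts G - X"
  shows "connected_set G (comp G X u)"
proof -
  let ?C = "comp G X u"
  let ?T = "adj G \<inter> ?C \<times> ?C"
  have sub: "?C \<subseteq> verts G" using comp_sub[OF wf u] by blast
  have path: "\<And>b. b \<in> ?C \<Longrightarrow> (u,b) \<in> ?T\<^sup>*"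
  proof -
    fix b assume "b \<in> ?C"
    then have "(u,b) \<in> (adj (delete_verts G X))\<^sup>*" by (simp add: comp_def)
    then show "(u,b) \<in> ?T\<^sup>*"
    proof (induction rule: rtrancl_induct)
      case base then show ?case by simp
    next
      case (step w z)
      have "w \<in> ?C" "z \<in> ?C" using step.hyps by (auto simp: comp_def intro: rtrancl_into_rtrancl)
      moreover have "{w,z} \<in> edges G" using step.hyps(2) adjD by blast
      then have "(w,z) \<in> adj G" by (simp add: adj_def)
      ultimately show ?case using step.IH by (meson IntI SigmaI rtrancl.rtrancl_into_rtrancl)
    qed
  qed
  have symT: "sym ?T" unfolding sym_def using adj_sym by blast
  show ?thesis unfolding connected_set_def
  proof (intro conjI ballI)
    show "?C \<noteq> {}" using comp_self by blast
    show "?C \<subseteq> verts G" using sub .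
    fix a b assume a: "a \<in> ?C" and b: "b \<in> ?C"
    have "(a,u) \<in> ?T\<^sup>*" using symD[OF sym_rtrancl[OF symT] path[OF a]] .
    then show "(a,b) \<in> ?T\<^sup>*" using path[OF b] by (rule rtrancl_trans)
  qed
qed

lemma comp_nbh: assumes wf: "wf_graph G" and u: "u \<in> verts G - X"
  shows "nbh G (comp G X u) \<subseteq> X"
proof
  fix v assume v: "v \<in> nbh G (comp G X u)"
  then obtain c where c: "c \<in> comp G X u" "{c,v} \<in> edges G" "v \<notin> comp G X u" by (auto simp: nbh_def)
  show "v \<in> X"
  proof (rule ccontr)
    assume "v \<notin> X"
    moreover have "c \<notin> X" using comp_sub[OF wf u] c(1) by blast
    ultimately have "(c,v) \<in> adj (delete_verts G X)" using c(2) by (simp add: adjD)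
    then have "v \<in> comp G X u" using c(1) unfolding comp_def by (auto intro: rtrancl_into_rtrancl)
    then show False using c(3) by blast
  qed
qed



lemma main_count:
  assumes wf: "wf_graph G" and sp: "sparse c G" and XV: "X \<subseteq> verts G" and Xne: "X \<noteq> {}"
  shows "card {nbh G C | C. C \<in> cc (delete_verts G X)} \<le> (c + 2^(2*c+1) + 3) * card X"
proof -
  define Q where "Q u = nbh G (comp G X u)" for u
  define N where "N = {nbh G C | C. C \<in> cc (delete_verts G X)}"
  have fV: "finite (verts G)" using wf unfolding wf_graph_def by blast
  have fX: "finite X" using fV XV finite_subset by blast
  have N_eq: "N = Q ` (verts G - X)" unfolding N_def Q_def cc_eq by blast
  have QX: "\<And>u. u \<in> verts G - X \<Longrightarrow> Q u \<subseteq> X" unfolding Q_def using comp_nbh[OF wf] by blast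
  have fN: "finite N" unfolding N_eq using fV by simp
  define Ns where "Ns = {S \<in> N. card S \<le> 1}"
  define Nb where "Nb = {S \<in> N. 2 \<le> card S}"
  have NU: "N = Ns \<union> Nb" unfolding Ns_def Nb_def by auto
  have small: "card Ns \<le> card X + 1"
  proof -
    have "Ns \<subseteq> insert {} ((\<lambda>x. {x}) ` X)"
    proof
      fix S assume S: "S \<in> Ns"
      then obtain u where u: "u \<in> verts G - X" "S = Q u" unfolding Ns_def N_eq by blast
      have SX: "S \<subseteq> X" using QX u by blast
      have fS: "finite S" using SX fX finite_subset by blast
      have "card S \<le> 1" using S by (simp add: Ns_def)
      then have "S = {} \<or> (\<exists>x. S = {x})" using fS by (metis card_0_eq card_1_singleton_iff le_SucE One_nat_def le_zero_eq)
      then show "S \<in> insert {} ((\<lambda>x. {x}) ` X)" using SX by auto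
    qed
    then have "card Ns \<le> card (insert {} ((\<lambda>x. {x}) ` X))" using fX by (intro card_mono) auto
    also have "\<dots> \<le> card ((\<lambda>x. {x}) ` X) + 1" by (simp add: card_insert_le_m1 card_insert_if)
    also have "\<dots> \<le> card X + 1" using card_image_le[OF fX] by simp
    finally show ?thesis .
  qed
  define rep where "rep S = (SOME u. u \<in> verts G - X \<and> S = Q u)" for S
  have rep: "\<And>S. S \<in> Nb \<Longrightarrow> rep S \<in> verts G - X \<and> Q (rep S) = S"
  proof -
    fix S assume "S \<in> Nb"
    then have "\<exists>u. u \<in> verts G - X \<and> S = Q u" unfolding Nb_def N_eq by blast
    then have "rep S \<in> verts G - X \<and> S = Q (rep S)" unfolding rep_def by (rule someI_ex)
    then show "rep S \<in> verts G - X \<and> Q (rep S) = S" by simp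
  qed
  define R where "R = rep ` Nb"
  have injrep: "inj_on rep Nb" unfolding inj_on_def using rep by metis
  have cardR: "card R = card Nb" unfolding R_def using card_image[OF injrep] .
  have RV: "R \<subseteq> verts G - X" unfolding R_def using rep by blast
  have fR: "finite R" using RV fV finite_subset by blast
  have QR: "\<And>r. r \<in> R \<Longrightarrow> Q r \<in> Nb" unfolding R_def using rep by auto
  have Rinj: "\<And>r r'. r \<in> R \<Longrightarrow> r' \<in> R \<Longrightarrow> Q r = Q r' \<Longrightarrow> r = r'"
    unfolding R_def using rep by auto
  define H :: graph where "H = (X \<union> R, {e \<in> edges G. e \<subseteq> X} \<union> {{x,r} | x r. r \<in> R \<and> x \<in> Q r})"
  have vH: "verts H = X \<union> R" by (simp add: H_def verts_def)
  have eH: "edges H = {e \<in> edges G. e \<subseteq> X} \<union> {{x,r} | x r. r \<in> R \<and> x \<in> Q r}" by (simp add: H_def edges_def)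
  have XR: "X \<inter> R = {}" using RV by blast
  have wfH: "wf_graph H" unfolding wf_graph_def
  proof (rule conjI)
    show "finite (verts H)" using fX fR vH by simp
  next
   show "\<forall>e\<in>edges H. e \<subseteq> verts H \<and> card e = 2"
   proof
    fix e assume "e \<in> edges H"
    then consider "e \<in> edges G" "e \<subseteq> X" | x r where "e = {x,r}" "r \<in> R" "x \<in> Q r" unfolding eH by blast
    then show "e \<subseteq> verts H \<and> card e = 2"
    proof cases
      case 1
      have "e \<subseteq> verts G \<and> card e = 2" using wf 1(1) unfolding wf_graph_def by blast
      then show ?thesis using 1(2) vH by blast
    next
      case 2
      have "x \<in> X" using QX 2 RV by blast
      then have "x \<noteq> r" using XR 2 by blast
      then show ?thesis using 2 \<open>x \<in> X\<close> vH by auto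
    qed
   qed
  qed
  have nbH: "\<And>r. r \<in> R \<Longrightarrow> nb H r = Q r"
  proof -
    fix r assume r: "r \<in> R"
    have rX: "r \<notin> X" using r XR by blast
    show "nb H r = Q r"
    proof
      show "nb H r \<subseteq> Q r"
      proof
        fix w assume "w \<in> nb H r"
        then have "{r,w} \<in> edges H" by (simp add: nb_def)
        then consider "{r,w} \<subseteq> X" | x r' where "{r,w} = {x,r'}" "r' \<in> R" "x \<in> Q r'" unfolding eH by blast
        then show "w \<in> Q r"
        proof cases
          case 1 then show ?thesis using rX by blast
        next
          case 2
          have "x \<in> X" using QX 2 RV by blast
          then have "r = r' \<and> w = x" using 2(1) rX by (auto simp: doubleton_eq_iff)
          then show ?thesis using 2 by simp
        qed
      qed
    next
      show "Q r \<subseteq> nb H r"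
      proof
        fix x assume "x \<in> Q r"
        then have "{x,r} \<in> edges H" using r unfolding eH by blast
        then show "x \<in> nb H r" by (simp add: nb_def insert_commute)
      qed
    qed
  qed
  define phi where "phi v = (if v \<in> X then {v} else comp G X v)" for v
  have minorH: "minor H G" unfolding minor_def
  proof (rule exI[of _ phi], intro conjI ballI allI impI)
    fix v assume "v \<in> verts H"
    then have "v \<in> X \<or> v \<in> R" by (simp add: vH)
    then show "connected_set G (phi v)"
    proof
      assume "v \<in> X" then show ?thesis using XV by (simp add: phi_def connected_single subsetD)
    next
      assume v: "v \<in> R"
      then have "v \<notin> X" "v \<in> verts G - X" using RV by auto
      then show ?thesis using comp_connected[OF wf] by (simp add: phi_def)
    qed
  next
    fix u v assume u: "u \<in> verts H" and v: "v \<in> verts H" and ne: "u \<noteq> v"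
    show "phi u \<inter> phi v = {}"
    proof (cases "u \<in> X")
      case True
      show ?thesis
      proof (cases "v \<in> X")
        case True then show ?thesis using \<open>u \<in> X\<close> ne by (simp add: phi_def)
      next
        case False
        then have "v \<in> verts G - X" using v vH RV by auto
        then show ?thesis using comp_sub[OF wf] \<open>u \<in> X\<close> False by (auto simp: phi_def)
      qed
    next
      case False
      then have uR: "u \<in> R" "u \<in> verts G - X" using u vH RV by auto
      show ?thesis
      proof (cases "v \<in> X")
        case True then show ?thesis using comp_sub[OF wf uR(2)] False by (auto simp: phi_def)
      next
        case False2: False
        then have vR: "v \<in> R" using v vH by auto
        show ?thesis
        proof (rule ccontr)
          assume "phi u \<inter> phi v \<noteq> {}"
          then obtain z where z: "z \<in> comp G X u" "z \<in> comp G X v" using False False2 by (auto simp: phi_def)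
          have "comp G X u = comp G X v" using comp_eq[OF z(1)] comp_eq[OF z(2)] by simp
          then have "Q u = Q v" by (simp add: Q_def)
          then show False using Rinj[OF uR(1) vR] ne by blast
        qed
      qed
    qed
  next
    fix u v assume e: "{u,v} \<in> edges H"
    have self: "\<And>w. w \<in> phi w" by (simp add: phi_def comp_self)
    from e consider "{u,v} \<in> edges G" | x r where "{u,v} = {x,r}" "r \<in> R" "x \<in> Q r" unfolding eH by blast
    then show "\<exists>a\<in>phi u. \<exists>b\<in>phi v. {a,b} \<in> edges G"
    proof cases
      case 1 then show ?thesis using self by blast
    next
      case 2
      have xX: "x \<in> X" using QX 2 RV by blast
      have rX: "r \<notin> X" using 2 XR by blast
      obtain c where c: "c \<in> comp G X r" "{c,x} \<in> edges G" using 2(3) by (auto simp: Q_def nbh_def)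
      have px: "phi x = {x}" "phi r = comp G X r" using xX rX by (auto simp: phi_def)
      have "(u = x \<and> v = r) \<or> (u = r \<and> v = x)" using 2(1) by (auto simp: doubleton_eq_iff)
      then show ?thesis
      proof
        assume "u = x \<and> v = r" then show ?thesis using px c by (auto simp: insert_commute)
      next
        assume "u = r \<and> v = x" then show ?thesis using px c by auto
      qed
    qed
  qed
  have spH: "sparse c H" using sparse_minor[OF sp minorH] .
  have c6: "\<forall>r\<in>R. nb H r \<subseteq> X" using nbH QX RV by auto
  have c7: "\<forall>r\<in>R. 2 \<le> card (nb H r)" using nbH QR by (auto simp: Nb_def)
  have c8: "inj_on (nb H) R" unfolding inj_on_def using nbH Rinj by auto
  have "card R + card {e \<in> edges H. e \<subseteq> X} \<le> c * card X + (2^(2*c+1) * card X + 1)"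
    using reduce[OF wfH spH XR vH fR c6 c7 c8] .
  then have big: "card Nb \<le> c * card X + (2^(2*c+1) * card X + 1)" using cardR by linarith
  have "card N \<le> card Ns + card Nb" unfolding NU by (rule card_Un_le)
  also have "\<dots> \<le> card X + 1 + (c * card X + (2^(2*c+1) * card X + 1))" using small big by linarith
  also have "\<dots> \<le> (c + 2^(2*c+1) + 3) * card X"
  proof -
    have "1 \<le> card X" using fX Xne by (simp add: Suc_le_eq card_gt_0_iff)
    then show ?thesis by (simp add: algebra_simps)
  qed
  finally show ?thesis unfolding N_def .
qed

theorem corollary2p3:
  fixes \<C> :: "graph set"
  assumes "apex_minor_free \<C>"
  shows "\<exists>\<nu>::real. \<nu> > 0 \<and>
    (\<forall>G\<in>\<C>. \<forall>X. X \<noteq> {} \<and> X \<subseteq> verts G \<longrightarrow>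
       real (card {nbh G C | C. C \<in> cc (delete_verts G X)}) \<le> \<nu> * real (card X))"
proof -
  obtain A where A: "wf_graph A" "\<forall>G\<in>\<C>. \<not> minor A G" and wfC: "\<forall>G\<in>\<C>. wf_graph G"
    using assms unfolding apex_minor_free_def by blast
  define c where "c = (2::nat) ^ card (verts A)"
  define K where "K = c + 2^(2*c+1) + 3"
  show ?thesis
  proof (rule exI[of _ "real K"], intro conjI ballI allI impI)
    have "K > 0" by (simp add: K_def)
    then show "0 < real K" by simp
    fix G X assume G: "G \<in> \<C>" and X: "X \<noteq> {} \<and> X \<subseteq> verts G"
    have wfG: "wf_graph G" using wfC G by blast
    have nm: "\<not> minor A G" using A(2) G by blast
    have sp: "sparse c G" unfolding c_def by (rule sparse_of_free[OF A(1) wfG nm])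
    have "card {nbh G C | C. C \<in> cc (delete_verts G X)} \<le> K * card X"
      unfolding K_def using main_count[OF wfG sp] X by blast
    then have "real (card {nbh G C | C. C \<in> cc (delete_verts G X)}) \<le> real (K * card X)"
      by (simp only: of_nat_le_iff)
    then show "real (card {nbh G C | C. C \<in> cc (delete_verts G X)}) \<le> real K * real (card X)"
      by simp
  qed
qed


end
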